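(* Let $(X,m)$ be a central configuration of $n$ particles $X=\{x_1,\ldots,x_n\}\subset\mathbb{R}^N$ with nonzero masses $m_i$, exponent $a\neq0$, total mass $\mu_0=\sum_im_i=0$ and constant $\lambda\neq0$. Let $d$ be the dimension and $c=(n-1)-d$ the codimension of $X$, and $X_j=X\setminus\{x_j\}$. Then: (1) $m=(m_1,\ldots,m_n)\in\mathbb{W}_0(X)$. (2) For every $j$, $x_j$ is the barycenter of $(X_j,m|_{X_j})$. (3) $c\ge1$ and the second moment $\mu_2(p)=\sum_im_i\overrightarrow{px_i}^2$ is constant; in particular $\sum_{i<j}m_im_js_{ij}=0$ and $\sum_{k=1}^nm_k(s_{ij}-s_{jk}+s_{ik})=0$ for all $i,j$. If $c=1$ then, for every $j$, $X_j$ is a $d$-dimensional simplex and $x_j$ is not on the boundary of the convex hull of $X_j$. (4) $d\le n-2$, and if $\Delta_{d+2\,\ldots\,n}\neq0$ then $(-1)^{i-d}m_i\Delta_{d+2\,\ldots\,n}=\sum_{l=d+2}^nm_l\Delta_{i\,d+2\,\ldots\,\widehat{l}\,\ldots\,n}$ for $i=1,\ldots,d+1$.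
   Context: $s_{ij}=\overrightarrow{x_ix_j}^2$; accelerations $\overrightarrow{\gamma}_j=-\sum_{i\neq j}m_is_{ij}^a\overrightarrow{x_ix_j}$. $(X,m)$ is central if there are a vector $\overrightarrow{\gamma}_O$, a point $x_O$ and $\lambda\in\mathbb{R}$ with $\overrightarrow{\gamma}_j-\overrightarrow{\gamma}_O=\lambda\overrightarrow{x_Ox_j}$ for all $j$. $\mathbb{W}_0(X)$ is the set of weight vectors $(w_i)$ with $\sum_iw_i\overrightarrow{px_i}=\overrightarrow{O}$ for all $p$. The barycenter of a weighted system $(Y,w)$ with nonzero total weight is the unique point $G$ with $\sum_{y}w(y)\overrightarrow{Gy}=\overrightarrow{O}$. In (4), $X$ is regarded as lying in $\mathbb{R}^d$ (its affine hull) and $\Delta_{j_1\ldots j_\beta}$ is the determinant of the augmented configuration matrix (columns $\binom{1}{x_j}$, increasing index) of the $(d+1)$-point subconfiguration $X\setminus\{x_{j_1},\ldots,x_{j_\beta}\}$; $\widehat{l}$ means the index $l$ is omitted. *)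

theory Defs
  imports "HOL-Analysis.Analysis"
begin

text \<open>Particles are indexed by a finite index set I (in the statement I = {1..n});
  positions x :: nat \<Rightarrow> 'a (the ambient space R^N), masses m :: nat \<Rightarrow> real.\<close>

definition sdist :: "(nat \<Rightarrow> 'a::euclidean_space) \<Rightarrow> nat \<Rightarrow> nat \<Rightarrow> real" where
  "sdist x i j = (norm (x j - x i))\<^sup>2"

definition accel :: "(nat \<Rightarrow> real) \<Rightarrow> real \<Rightarrow> (nat \<Rightarrow> 'a::euclidean_space) \<Rightarrow> nat set \<Rightarrow> nat \<Rightarrow> 'a" where
  "accel m a x I j = - (\<Sum>i\<in>I - {j}. (m i * sdist x i j powr a) *\<^sub>R (x j - x i))"

definition central :: "(nat \<Rightarrow> real) \<Rightarrow> real \<Rightarrow> (nat \<Rightarrow> 'a::euclidean_space) \<Rightarrow> nat set \<Rightarrow> real \<Rightarrow> bool" where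
  "central m a x I lam = (\<exists>gO xO. \<forall>j\<in>I. accel m a x I j - gO = lam *\<^sub>R (x j - xO))"

definition W0 :: "(nat \<Rightarrow> 'a::euclidean_space) \<Rightarrow> nat set \<Rightarrow> (nat \<Rightarrow> real) set" where
  "W0 x I = {w. \<forall>p. (\<Sum>i\<in>I. w i *\<^sub>R (x i - p)) = 0}"

text \<open>Barycenter of the weighted system (x restricted to J, w): the unique G with
  sum_{i in J} w_i (x_i - G) = 0 (meaningful when the total weight is nonzero).\<close>
definition barycenter :: "(nat \<Rightarrow> real) \<Rightarrow> (nat \<Rightarrow> 'a::euclidean_space) \<Rightarrow> nat set \<Rightarrow> 'a" where
  "barycenter w x J = (THE G. (\<Sum>i\<in>J. w i *\<^sub>R (x i - G)) = 0)"

definition moment2 :: "(nat \<Rightarrow> real) \<Rightarrow> (nat \<Rightarrow> 'a::euclidean_space) \<Rightarrow> nat set \<Rightarrow> 'a \<Rightarrow> real" where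
  "moment2 m x I p = (\<Sum>i\<in>I. m i * (norm (x i - p))\<^sup>2)"

definition ldet :: "nat \<Rightarrow> (nat \<Rightarrow> nat \<Rightarrow> real) \<Rightarrow> real" where
  "ldet k A = (\<Sum>p\<in>{p. p permutes {..<k}}. of_int (sign p) * (\<Prod>r<k. A r (p r)))"

definition affine_coords :: "(nat \<Rightarrow> 'a::euclidean_space) \<Rightarrow> nat set \<Rightarrow> nat \<Rightarrow> (nat \<Rightarrow> nat \<Rightarrow> real) \<Rightarrow> bool" where
  "affine_coords x I d y = (\<exists>orig b. inj_on b {..<d} \<and> independent (b ` {..<d}) \<and>
      (\<forall>i\<in>I. x i = orig + (\<Sum>k<d. y i k *\<^sub>R b k)))"

text \<open>Determinant of the augmented configuration matrix of the (d+1)-point subconfiguration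
  with index set S: column c is (1, y_{s_c}) where s_0 < s_1 < ... are the elements of S.\<close>
definition aug_det :: "nat \<Rightarrow> (nat \<Rightarrow> nat \<Rightarrow> real) \<Rightarrow> nat set \<Rightarrow> real" where
  "aug_det d y S = ldet (d + 1)
     (\<lambda>r c. if r = 0 then 1 else y (sorted_list_of_set S ! c) (r - 1))"

definition Delta :: "nat \<Rightarrow> nat \<Rightarrow> (nat \<Rightarrow> nat \<Rightarrow> real) \<Rightarrow> nat set \<Rightarrow> real" where
  "Delta n d y J = aug_det d y ({1..n} - J)"

end

theory Submission
  imports Defs "Jordan_Normal_Form.Determinant"
begin

lemma ldet_det: "ldet k A = det (mat k k (\<lambda>(r,c). A r c))"
  unfolding ldet_def det_def
  by (auto simp: atLeast0LessThan intro!: sum.cong prod.cong)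

definition colf :: "(nat \<Rightarrow> nat \<Rightarrow> real) \<Rightarrow> nat \<Rightarrow> nat \<Rightarrow> real" where
  "colf y j r = (if r = 0 then 1 else y j (r - 1))"

definition colmat :: "nat \<Rightarrow> (nat \<Rightarrow> nat \<Rightarrow> real) \<Rightarrow> (nat \<Rightarrow> nat) \<Rightarrow> real mat" where
  "colmat k y F = mat k k (\<lambda>(r,c). colf y (F c) r)"

lemma aug_det_colmat: "aug_det d y S = det (colmat (d+1) y (\<lambda>c. sorted_list_of_set S ! c))"
  unfolding aug_det_def ldet_det colmat_def colf_def by simp

lemma colmat_cong: "(\<And>c. c < k \<Longrightarrow> F c = F' c) \<Longrightarrow> colmat k y F = colmat k y F'"
  unfolding colmat_def by (intro eq_matI) auto

lemma det_replace_col_expand: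
  fixes A :: "real mat"
  assumes A: "A \<in> carrier_mat k k" and p: "p < k"
  shows "det (replace_col A (vec k v) p) =
    (\<Sum>\<pi> | \<pi> permutes {0..<k}. signof \<pi> * (v (\<pi> p) * (\<Prod>j\<in>{..<k}-{p}. A $$ (\<pi> j, j))))"
proof -
  have B: "replace_col A (vec k v) p \<in> carrier_mat k k" using A by (auto simp: replace_col_def)
  show ?thesis
    unfolding det_col[OF B]
  proof (intro sum.cong refl)
    fix \<pi> assume "\<pi> \<in> {\<pi>. \<pi> permutes {0..<k}}"
    then have pi: "\<pi> permutes {0..<k}" by simp
    have lt: "j < k \<Longrightarrow> \<pi> j < k" for j using permutes_in_image[OF pi, of j] by simp
    have "(\<Prod>j<k. replace_col A (vec k v) p $$ (\<pi> j, j))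
        = replace_col A (vec k v) p $$ (\<pi> p, p) * (\<Prod>j\<in>{..<k}-{p}. replace_col A (vec k v) p $$ (\<pi> j, j))"
      using p by (subst prod.remove[of _ p]) auto
    also have "\<dots> = v (\<pi> p) * (\<Prod>j\<in>{..<k}-{p}. A $$ (\<pi> j, j))"
      using A p lt by (auto simp: replace_col_def intro!: prod.cong)
    finally show "signof \<pi> * (\<Prod>j<k. replace_col A (vec k v) p $$ (\<pi> j, j)) =
        signof \<pi> * (v (\<pi> p) * (\<Prod>j\<in>{..<k}-{p}. A $$ (\<pi> j, j)))" by simp
  qed
qed

lemma det_replace_col_sum:
  fixes A :: "real mat"
  assumes A: "A \<in> carrier_mat k k" and p: "p < k" and L: "finite L"
  shows "det (replace_col A (vec k (\<lambda>r. \<Sum>l\<in>L. c l * f l r)) p) =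
    (\<Sum>l\<in>L. c l * det (replace_col A (vec k (f l)) p))"
  unfolding det_replace_col_expand[OF A p]
  by (simp add: sum_distrib_left sum_distrib_right sum.swap[of _ L] mult.assoc mult.left_commute)

lemma sorted_list_Sl:
  assumes i: "1 \<le> i" "i \<le> d+1" and l: "d+2 \<le> l" "l \<le> n"
  shows "sorted_list_of_set ({1..n} - insert i ({d+2..n} - {l})) = [1..<i] @ [Suc i..<d+2] @ [l]"
proof -
  have S: "{1..n} - insert i ({d+2..n} - {l}) = set ([1..<i] @ [Suc i..<d+2] @ [l])"
    using i l by auto
  show ?thesis unfolding S
    by (rule sorted_list_of_set.idem_if_sorted_distinct) (use i l in \<open>auto simp: sorted_append\<close>)
qed

lemma Delta_main: "d + 1 \<le> n \<Longrightarrow> Delta n d y {d+2..n} = det (colmat (d+1) y Suc)"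
  unfolding Delta_def aug_det_colmat
proof -
  assume "d + 1 \<le> n"
  then have "{1..n} - {d+2..n} = {1..<d+2}" by auto
  then show "det (colmat (d + 1) y ((!) (sorted_list_of_set ({1..n} - {d + 2..n})))) =
    det (colmat (d + 1) y Suc)"
    by (auto simp del: upt_Suc intro!: arg_cong[where f=det] colmat_cong)
qed

lemma Delta_l:
  assumes i: "1 \<le> i" "i \<le> d+1" and l: "d+2 \<le> l" "l \<le> n"
  shows "Delta n d y (insert i ({d+2..n} - {l})) =
    det (colmat (d+1) y (\<lambda>c. if c < i - 1 then c + 1 else if c < d then c + 2 else l))"
  unfolding Delta_def aug_det_colmat sorted_list_Sl[OF assms]
  using i by (intro arg_cong[where f=det] colmat_cong) (auto simp: nth_append)

lemma colmat_carrier[simp]: "colmat k y F \<in> carrier_mat k k"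
  unfolding colmat_def by simp

lemma move_col:
  assumes p: "p \<le> d" and l: "d+2 \<le> l"
  shows "det (replace_col (colmat (d+1) y Suc) (vec (d+1) (colf y l)) p) =
    (-1)^(d-p) * det (colmat (d+1) y (\<lambda>c. if c < p then c + 1 else if c < d then c + 2 else l))"
proof -
  let ?A = "replace_col (colmat (d+1) y Suc) (vec (d+1) (colf y l)) p"
  have A: "?A \<in> carrier_mat (d+1) (d+1)" by (simp add: replace_col_def colmat_def)
  have "det ?A = (- 1) ^ (1 * (d-p)) *
    det (mat (d+1) (d+1) (\<lambda>(i, j). ?A $$ (i, if j < p then j else if j < p + (d-p) then j + 1 else j - (d-p))))"
    by (rule det_swap_final_cols[OF A]) (use p in auto)
  also have "mat (d+1) (d+1) (\<lambda>(i, j). ?A $$ (i, if j < p then j else if j < p + (d-p) then j + 1 else j - (d-p)))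
      = colmat (d+1) y (\<lambda>c. if c < p then c + 1 else if c < d then c + 2 else l)"
    using p by (intro eq_matI) (auto simp: replace_col_def colmat_def)
  finally show ?thesis by simp
qed

lemma neg1_sq: "(-1::real)^k * (-1)^k = 1"
  by (induct k) auto

lemma neg1_inv: "1 / (-1::real)^k = (-1)^k"
  by (induct k) auto

lemma det_identity:
  fixes m :: "nat \<Rightarrow> real" and y :: "nat \<Rightarrow> nat \<Rightarrow> real"
  assumes dn: "d + 1 \<le> n"
    and tot: "\<forall>r<d+1. (\<Sum>j\<in>{1..n}. m j * colf y j r) = 0"
    and i: "i \<in> {1..d+1}"
  shows "(-1) powi (int i - int d) * m i * Delta n d y {d+2..n}
     = (\<Sum>l\<in>{d+2..n}. m l * Delta n d y (insert i ({d+2..n}-{l})))"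
proof -
  define V where "V = colmat (d+1) y Suc"
  define p where "p = i - 1"
  define mv where "mv = vec (d+1) (\<lambda>c. m (c+1))"
  have V: "V \<in> carrier_mat (d+1) (d+1)" unfolding V_def by simp
  have p: "p < d + 1" "i = Suc p" using i unfolding p_def by auto
  have mvc: "mv \<in> carrier_vec (d+1)" unfolding mv_def by simp
  have split: "{1..n} = {Suc 0..<Suc (d+1)} \<union> {d+2..n}" using dn by auto
  have mv: "V *\<^sub>v mv = vec (d+1) (\<lambda>r. \<Sum>l\<in>{d+2..n}. (- m l) * colf y l r)"
  proof (rule eq_vecI)
    show "dim_vec (V *\<^sub>v mv) = dim_vec (vec (d + 1) (\<lambda>r. \<Sum>l\<in>{d + 2..n}. - m l * colf y l r))"
      using V by simp
    fix r assume "r < dim_vec (vec (d + 1) (\<lambda>r. \<Sum>l\<in>{d + 2..n}. - m l * colf y l r))"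
    then have r: "r < d + 1" by simp
    have "(V *\<^sub>v mv) $ r = (\<Sum>c\<in>{0..<d+1}. colf y (Suc c) r * m (Suc c))"
      using V r unfolding mv_def V_def by (simp add: scalar_prod_def colmat_def)
    also have "\<dots> = (\<Sum>j\<in>{Suc 0..<Suc (d+1)}. m j * colf y j r)"
      by (subst sum.shift_bounds_Suc_ivl) (simp add: mult.commute)
    also have "\<dots> = - (\<Sum>l\<in>{d+2..n}. m l * colf y l r)"
    proof -
      have "(\<Sum>j\<in>{1..n}. m j * colf y j r) = (\<Sum>j\<in>{Suc 0..<Suc (d+1)}. m j * colf y j r) + (\<Sum>l\<in>{d+2..n}. m l * colf y l r)"
        unfolding split by (rule sum.union_disjoint) auto
      then show ?thesis using tot[rule_format, OF r] by linarith
    qed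
    finally show "(V *\<^sub>v mv) $ r = vec (d + 1) (\<lambda>r. \<Sum>l\<in>{d + 2..n}. - m l * colf y l r) $ r"
      using r by (simp add: sum_negf)
  qed
  have "m i * det V = mv $ p * det V" using p unfolding mv_def by simp
  also have "\<dots> = det (replace_col V (V *\<^sub>v mv) p)"
    by (rule cramer_lemma_mat[OF V mvc p(1), symmetric])
  also have "\<dots> = (\<Sum>l\<in>{d+2..n}. (- m l) * det (replace_col V (vec (d+1) (colf y l)) p))"
    unfolding mv by (rule det_replace_col_sum[OF V p(1)]) simp
  also have "\<dots> = (\<Sum>l\<in>{d+2..n}. (- m l) * ((-1)^(d-p) * Delta n d y (insert i ({d+2..n}-{l}))))"
  proof (intro sum.cong refl)
    fix l assume l: "l \<in> {d+2..n}"
    show "- m l * det (replace_col V (vec (d + 1) (colf y l)) p) =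
         - m l * ((- 1) ^ (d - p) * Delta n d y (insert i ({d + 2..n} - {l})))"
    proof -
      have "det (replace_col (colmat (d+1) y Suc) (vec (d+1) (colf y l)) p) =
        (-1)^(d-p) * det (colmat (d+1) y (\<lambda>c. if c < p then c + 1 else if c < d then c + 2 else l))"
        by (rule move_col) (use p l in auto)
      moreover have "Delta n d y (insert i ({d+2..n} - {l})) =
        det (colmat (d+1) y (\<lambda>c. if c < i - 1 then c + 1 else if c < d then c + 2 else l))"
        by (rule Delta_l) (use i l in auto)
      ultimately show ?thesis by (simp add: p_def V_def)
    qed
  qed
  finally have key: "m i * det V = (-1) * (-1)^(d-p) * (\<Sum>l\<in>{d+2..n}. m l * Delta n d y (insert i ({d+2..n}-{l})))"
    by (simp add: sum_distrib_left algebra_simps)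
  have "int i - int d = 1 - int (d - p)" using p by auto
  then have sg: "(-1::real) powi (int i - int d) = (-1) * (-1)^(d-p)"
    by (simp only:) (simp add: power_int_diff neg1_inv)
  define S where "S = (\<Sum>l\<in>{d+2..n}. m l * Delta n d y (insert i ({d+2..n}-{l})))"
  have "((-1) * (-1::real)^(d-p)) * m i * det V = ((-1) * (-1)^(d-p)) * (m i * det V)" by simp
  also have "\<dots> = ((-1)^(d-p) * (-1)^(d-p)) * S" unfolding key S_def by (simp add: algebra_simps)
  also have "\<dots> = S" by (simp only: neg1_sq mult_1)
  finally show ?thesis
    unfolding Delta_main[OF dn] V_def[symmetric] sg S_def .
qed


lemma sdist_sym: "sdist x i j = sdist x j i"
  unfolding sdist_def by (simp add: norm_minus_commute)

lemma accel_sum_zero: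
  fixes x :: "nat \<Rightarrow> 'a::euclidean_space"
  assumes fin: "finite I"
  shows "(\<Sum>j\<in>I. m j *\<^sub>R accel m a x I j) = 0"
proof -
  define F where "F i j = (m j * (m i * sdist x i j powr a)) *\<^sub>R (x j - x i)" for i j
  have Fa: "F j i = - F i j" for i j
    unfolding F_def by (simp add: sdist_sym[of x j i] algebra_simps)
  have inner: "m j *\<^sub>R accel m a x I j = - (\<Sum>i\<in>I. F i j)" if "j \<in> I" for j
  proof -
    have "m j *\<^sub>R accel m a x I j = - (\<Sum>i\<in>I - {j}. F i j)"
      unfolding accel_def F_def by (simp add: scaleR_sum_right)
    also have "(\<Sum>i\<in>I - {j}. F i j) = (\<Sum>i\<in>I. F i j)"
      using that fin by (simp add: sum_diff1 F_def)
    finally show ?thesis .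
  qed
  define T where "T = (\<Sum>j\<in>I. \<Sum>i\<in>I. F i j)"
  have "T = (\<Sum>i\<in>I. \<Sum>j\<in>I. F i j)" unfolding T_def by (rule sum.swap)
  also have "\<dots> = (\<Sum>i\<in>I. \<Sum>j\<in>I. - F j i)" by (intro sum.cong refl) (rule Fa)
  also have "\<dots> = - T" unfolding T_def by (simp add: sum_negf)
  finally have "T = - T" .
  then have "T + T = 0" by (simp add: eq_neg_iff_add_eq_0)
  then have "2 *\<^sub>R T = 0" by (simp add: scaleR_2)
  then have "T = 0" by simp
  then show ?thesis using inner unfolding T_def by (simp add: sum_negf)
qed

lemma center_zero:
  fixes x :: "nat \<Rightarrow> 'a::euclidean_space"
  assumes fin: "finite I" and tot: "(\<Sum>i\<in>I. m i) = 0" and lam: "lam \<noteq> 0"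
    and cc: "central m a x I lam"
  shows "(\<Sum>i\<in>I. m i *\<^sub>R x i) = 0"
proof -
  obtain gO xO where h: "\<forall>j\<in>I. accel m a x I j - gO = lam *\<^sub>R (x j - xO)"
    using cc unfolding central_def by blast
  have "(\<Sum>j\<in>I. m j *\<^sub>R (accel m a x I j - gO)) = (\<Sum>j\<in>I. m j *\<^sub>R (lam *\<^sub>R (x j - xO)))"
    using h by simp
  moreover have "(\<Sum>j\<in>I. m j *\<^sub>R (accel m a x I j - gO)) = 0"
    using accel_sum_zero[OF fin, of m a x] tot
    by (simp add: scaleR_right_diff_distrib sum_subtractf flip: scaleR_sum_left)
  moreover have "(\<Sum>j\<in>I. m j *\<^sub>R (lam *\<^sub>R (x j - xO))) = lam *\<^sub>R (\<Sum>j\<in>I. m j *\<^sub>R (x j - xO))"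
    by (simp add: scaleR_sum_right scaleR_scaleR mult.commute)
  moreover have "(\<Sum>j\<in>I. m j *\<^sub>R (x j - xO)) = (\<Sum>i\<in>I. m i *\<^sub>R x i) - (\<Sum>i\<in>I. m i) *\<^sub>R xO"
    by (simp add: scaleR_right_diff_distrib sum_subtractf scaleR_sum_left)
  ultimately show ?thesis using lam tot by simp
qed

lemma W0_sum:
  fixes x :: "nat \<Rightarrow> 'a::euclidean_space"
  assumes S0: "(\<Sum>i\<in>I. m i *\<^sub>R x i) = 0" and tot: "(\<Sum>i\<in>I. m i) = 0"
  shows "(\<Sum>i\<in>I. m i *\<^sub>R (x i - p)) = 0"
  using S0 tot by (simp add: scaleR_right_diff_distrib sum_subtractf flip: scaleR_sum_left)

lemma moment2_eq:
  fixes x :: "nat \<Rightarrow> 'a::euclidean_space"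
  shows "moment2 m x I p = (\<Sum>i\<in>I. m i * (norm (x i))\<^sup>2) - 2 * inner (\<Sum>i\<in>I. m i *\<^sub>R x i) p
     + (\<Sum>i\<in>I. m i) * (norm p)\<^sup>2"
proof -
  have e: "(norm (x i - p))\<^sup>2 = (norm (x i))\<^sup>2 - 2 * inner (x i) p + (norm p)\<^sup>2" for i
    by (simp add: power2_norm_eq_inner inner_diff_left inner_diff_right inner_commute)
  have "moment2 m x I p = (\<Sum>i\<in>I. m i * (norm (x i))\<^sup>2 - 2 * (m i * inner (x i) p) + m i * (norm p)\<^sup>2)"
    unfolding moment2_def e by (intro sum.cong refl) (simp add: algebra_simps)
  also have "\<dots> = (\<Sum>i\<in>I. m i * (norm (x i))\<^sup>2) - 2 * (\<Sum>i\<in>I. m i * inner (x i) p) + (\<Sum>i\<in>I. m i * (norm p)\<^sup>2)"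
    by (simp add: sum.distrib sum_subtractf sum_distrib_left)
  also have "(\<Sum>i\<in>I. m i * inner (x i) p) = inner (\<Sum>i\<in>I. m i *\<^sub>R x i) p"
    by (simp add: inner_sum_left)
  also have "(\<Sum>i\<in>I. m i * (norm p)\<^sup>2) = (\<Sum>i\<in>I. m i) * (norm p)\<^sup>2"
    by (simp add: sum_distrib_right)
  finally show ?thesis .
qed

lemma moment2_const:
  fixes x :: "nat \<Rightarrow> 'a::euclidean_space"
  assumes S0: "(\<Sum>i\<in>I. m i *\<^sub>R x i) = 0" and tot: "(\<Sum>i\<in>I. m i) = 0"
  shows "moment2 m x I p = (\<Sum>i\<in>I. m i * (norm (x i))\<^sup>2)"
  unfolding moment2_eq S0 tot by simp

lemma pair_sum:
  fixes x :: "nat \<Rightarrow> 'a::euclidean_space"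
  assumes S0: "(\<Sum>i\<in>I. m i *\<^sub>R x i) = 0" and tot: "(\<Sum>i\<in>I. m i) = 0"
  shows "(\<Sum>i\<in>I. \<Sum>j\<in>I. if i < j then m i * m j * sdist x i j else 0) = 0"
proof -
  define g where "g i j = m i * m j * sdist x i j" for i j
  have gs: "g i j = g j i" for i j unfolding g_def by (simp add: sdist_sym[of x i j])
  have gd: "g i i = 0" for i unfolding g_def sdist_def by simp
  define P where "P = (\<Sum>i\<in>I. \<Sum>j\<in>I. if i < j then g i j else 0)"
  have full: "(\<Sum>i\<in>I. \<Sum>j\<in>I. g i j) = 0"
  proof -
    have "(\<Sum>i\<in>I. \<Sum>j\<in>I. g i j) = (\<Sum>i\<in>I. m i * moment2 m x I (x i))"
      unfolding g_def moment2_def sdist_def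
      by (simp add: sum_distrib_left mult.assoc mult.left_commute)
    also have "\<dots> = 0" unfolding moment2_const[OF S0 tot]
      by (simp add: tot flip: sum_distrib_right)
    finally show ?thesis .
  qed
  have split: "g i j = (if i < j then g i j else 0) + (if j < i then g i j else 0)" for i j
    using gd[of i] by (cases i j rule: linorder_cases) auto
  have "(\<Sum>i\<in>I. \<Sum>j\<in>I. if j < i then g i j else 0) = (\<Sum>j\<in>I. \<Sum>i\<in>I. if j < i then g i j else 0)"
    by (rule sum.swap)
  also have "\<dots> = P" unfolding P_def by (intro sum.cong refl) (metis gs)
  finally have "(\<Sum>i\<in>I. \<Sum>j\<in>I. g i j) = P + P"
    unfolding P_def by (subst split) (simp add: sum.distrib)
  then have "P = 0" using full by simp
  then show ?thesis unfolding P_def g_def .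
qed

lemma triple_sum:
  fixes x :: "nat \<Rightarrow> 'a::euclidean_space"
  assumes S0: "(\<Sum>i\<in>I. m i *\<^sub>R x i) = 0" and tot: "(\<Sum>i\<in>I. m i) = 0"
  shows "(\<Sum>k\<in>I. m k * (sdist x i j - sdist x j k + sdist x i k)) = 0"
proof -
  have "(\<Sum>k\<in>I. m k * (sdist x i j - sdist x j k + sdist x i k))
     = sdist x i j * (\<Sum>k\<in>I. m k) - moment2 m x I (x j) + moment2 m x I (x i)"
    unfolding moment2_def sdist_def
    by (simp add: algebra_simps sum.distrib sum_subtractf flip: sum_distrib_right)
  then show ?thesis unfolding moment2_const[OF S0 tot] tot by simp
qed

lemma aff_dim_bound:
  fixes x :: "nat \<Rightarrow> 'a::euclidean_space"
  assumes fin: "finite I" and inj: "inj_on x I" and S0: "(\<Sum>i\<in>I. m i *\<^sub>R x i) = 0"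
    and tot: "(\<Sum>i\<in>I. m i) = 0" and j0: "j0 \<in> I" "m j0 \<noteq> 0"
  shows "aff_dim (x ` I) \<le> int (card I) - 2"
proof -
  have finX: "finite (x ` I)" using fin by simp
  have dep: "affine_dependent (x ` I)"
    unfolding affine_dependent_explicit_finite[OF finX]
  proof (intro exI conjI)
    show "sum (\<lambda>v. m (inv_into I x v)) (x ` I) = 0"
      using tot inj by (simp add: sum.reindex)
    show "(\<Sum>v\<in>x ` I. m (inv_into I x v) *\<^sub>R v) = 0"
      using S0 inj by (simp add: sum.reindex)
    show "\<exists>v\<in>x ` I. m (inv_into I x v) \<noteq> 0"
      using j0 inj by (intro bexI[of _ "x j0"]) auto
  qed
  have cX: "card (x ` I) = card I" using inj by (simp add: card_image)
  have "aff_dim (x ` I) \<noteq> int (card I) - 1"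
    using dep affine_independent_iff_card[of "x ` I"] finX cX by simp
  moreover have "aff_dim (x ` I) \<le> int (card I) - 1"
    using aff_dim_le_card[OF finX] cX by simp
  ultimately show ?thesis by simp
qed

lemma codim1:
  fixes x :: "nat \<Rightarrow> 'a::euclidean_space"
  assumes fin: "finite I" and inj: "inj_on x I" and S0: "(\<Sum>i\<in>I. m i *\<^sub>R x i) = 0"
    and tot: "(\<Sum>i\<in>I. m i) = 0" and masses: "\<forall>i\<in>I. m i \<noteq> 0" and j: "j \<in> I"
    and hyp: "aff_dim (x ` I) = int (card I) - 2"
  shows "aff_dim (x ` I) simplex (convex hull (x ` (I - {j})))
     \<and> x j \<notin> rel_frontier (convex hull (x ` (I - {j})))"
proof -
  define J where "J = I - {j}"
  define Y where "Y = x ` J"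
  have finJ: "finite J" using fin unfolding J_def by simp
  have finY: "finite Y" using finJ unfolding Y_def by simp
  have injJ: "inj_on x J" using inj unfolding J_def by (rule inj_on_subset) auto
  have cI: "card I \<ge> 1" using j fin by (metis One_nat_def Suc_leI card_gt_0_iff empty_iff)
  have cY: "card Y = card I - 1" unfolding Y_def J_def
    using card_image[OF injJ[unfolded J_def]] j fin by simp
  have mj: "m j \<noteq> 0" using masses j by simp
  define u where "u v = m (inv_into I x v) / (- m j)" for v
  have uxi: "u (x i) = m i / (- m j)" if "i \<in> J" for i
    using that inj unfolding u_def J_def by simp
  have sumJ: "(\<Sum>i\<in>J. m i) = - m j" using tot j fin unfolding J_def by (simp add: sum_diff1)
  have SJ: "(\<Sum>i\<in>J. m i *\<^sub>R x i) = - (m j *\<^sub>R x j)" using S0 j fin unfolding J_def by (simp add: sum_diff1)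
  have usum: "sum u Y = 1"
  proof -
    have "sum u Y = (\<Sum>i\<in>J. m i / (- m j))" unfolding Y_def
      using injJ uxi by (simp add: sum.reindex)
    also have "\<dots> = 1" by (simp only: sum_divide_distrib[symmetric] sumJ) (use mj in simp)
    finally show ?thesis .
  qed
  have ucomb: "(\<Sum>v\<in>Y. u v *\<^sub>R v) = x j"
  proof -
    have "(\<Sum>v\<in>Y. u v *\<^sub>R v) = (\<Sum>i\<in>J. (m i / (- m j)) *\<^sub>R x i)" unfolding Y_def
      using injJ uxi by (simp add: sum.reindex)
    also have "\<dots> = (1 / (- m j)) *\<^sub>R (\<Sum>i\<in>J. m i *\<^sub>R x i)"
      by (simp add: scaleR_sum_right)
    also have "\<dots> = x j" unfolding SJ using mj by simp
    finally show ?thesis .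
  qed
  have xj_hull: "x j \<in> affine hull Y"
    unfolding affine_hull_finite[OF finY] using usum ucomb by blast
  have XI: "x ` I = insert (x j) Y" unfolding Y_def J_def using j by auto
  have affY: "aff_dim Y = aff_dim (x ` I)" unfolding XI aff_dim_insert using xj_hull by simp
  have indep: "\<not> affine_dependent Y"
    unfolding affine_independent_iff_card using finY affY hyp cY cI by (simp add: of_nat_diff)
  have simp: "aff_dim (x ` I) simplex (convex hull Y)"
    unfolding simplex_def using indep cY hyp cI by (intro exI[of _ Y]) (simp add: of_nat_diff)
  have nf: "x j \<notin> rel_frontier (convex hull Y)"
  proof
    assume "x j \<in> rel_frontier (convex hull Y)"
    then have inh: "x j \<in> convex hull Y" and nri: "x j \<notin> rel_interior (convex hull Y)"
      unfolding rel_frontier_def closure_convex_hull[OF finite_imp_compact[OF finY]] by auto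
    obtain w where w0: "\<forall>v\<in>Y. 0 \<le> w v" and w1: "sum w Y = 1" and wc: "(\<Sum>v\<in>Y. w v *\<^sub>R v) = x j"
      using inh unfolding convex_hull_finite[OF finY] by blast
    have wu: "\<forall>v\<in>Y. w v - u v = 0"
    proof (rule ccontr)
      assume "\<not> (\<forall>v\<in>Y. w v - u v = 0)"
      then have "affine_dependent Y"
        unfolding affine_dependent_explicit_finite[OF finY]
        using w1 usum wc ucomb
        by (intro exI[of _ "\<lambda>v. w v - u v"]) (auto simp: sum_subtractf scaleR_left_diff_distrib)
      then show False using indep by simp
    qed
    have upos: "\<forall>v\<in>Y. 0 < u v"
    proof
      fix v assume v: "v \<in> Y"
      then obtain i where i: "i \<in> J" "v = x i" unfolding Y_def by blast
      have "u v \<noteq> 0" using i uxi masses mj unfolding J_def by auto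
      moreover have "u v \<ge> 0" using wu w0 v by force
      ultimately show "0 < u v" by simp
    qed
    have "x j \<in> rel_interior (convex hull Y)"
      unfolding rel_interior_convex_hull_explicit[OF indep] using upos usum ucomb by blast
    then show False using nri by simp
  qed
  show ?thesis using simp nf unfolding Y_def J_def by simp
qed

lemma coords_zero:
  fixes x :: "nat \<Rightarrow> 'a::euclidean_space"
  assumes ac: "affine_coords x I d y" and S0: "(\<Sum>i\<in>I. m i *\<^sub>R x i) = 0"
    and tot: "(\<Sum>i\<in>I. m i) = 0" and r: "r < d"
  shows "(\<Sum>i\<in>I. m i * y i r) = 0"
proof -
  obtain orig b where injb: "inj_on b {..<d}" and indb: "independent (b ` {..<d})"
    and xe: "\<forall>i\<in>I. x i = orig + (\<Sum>k<d. y i k *\<^sub>R b k)"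
    using ac unfolding affine_coords_def by blast
  define c where "c k = (\<Sum>i\<in>I. m i * y i k)" for k
  have "(\<Sum>k<d. c k *\<^sub>R b k) = (\<Sum>i\<in>I. m i *\<^sub>R (\<Sum>k<d. y i k *\<^sub>R b k))"
    unfolding c_def by (simp add: scaleR_sum_left scaleR_sum_right sum.swap[of _ "{..<d}"])
  also have "\<dots> = (\<Sum>i\<in>I. m i *\<^sub>R (x i - orig))"
    using xe by (intro sum.cong refl) simp
  also have "\<dots> = 0" by (rule W0_sum[OF S0 tot])
  finally have cz: "(\<Sum>k<d. c k *\<^sub>R b k) = 0" .
  show ?thesis
  proof (rule ccontr)
    assume "(\<Sum>i\<in>I. m i * y i r) \<noteq> 0"
    then have cr: "c r \<noteq> 0" unfolding c_def .
    have "dependent (b ` {..<d})"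
      unfolding real_vector.dependent_finite[OF finite_imageI[OF finite_lessThan]]
    proof (intro exI conjI)
      show "\<exists>v\<in>b ` {..<d}. c (inv_into {..<d} b v) \<noteq> 0"
        using r cr injb by (intro bexI[of _ "b r"]) auto
      show "(\<Sum>v\<in>b ` {..<d}. c (inv_into {..<d} b v) *\<^sub>R v) = 0"
        using cz injb by (simp add: sum.reindex)
    qed
    then show False using indb by simp
  qed
qed

theorem proposition5p1:
  fixes x :: "nat \<Rightarrow> 'a::euclidean_space"
    and m :: "nat \<Rightarrow> real" and a lam :: real and n :: nat
  assumes n_pos: "n \<ge> 1"
    and distinct: "inj_on x {1..n}"
    and masses: "\<forall>i\<in>{1..n}. m i \<noteq> 0"
    and a_nz: "a \<noteq> 0"
    and total: "(\<Sum>i\<in>{1..n}. m i) = 0"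
    and lam_nz: "lam \<noteq> 0"
    and cc: "central m a x {1..n} lam"
  shows
    "m \<in> W0 x {1..n}
     \<and> (\<forall>j\<in>{1..n}. (\<Sum>i\<in>{1..n} - {j}. m i) \<noteq> 0 \<and> x j = barycenter m x ({1..n} - {j}))
     \<and> (int n - 1) - aff_dim (x ` {1..n}) \<ge> 1
     \<and> (\<exists>C. \<forall>p. moment2 m x {1..n} p = C)
     \<and> (\<Sum>i\<in>{1..n}. \<Sum>j\<in>{1..n}. if i < j then m i * m j * sdist x i j else 0) = 0
     \<and> (\<forall>i\<in>{1..n}. \<forall>j\<in>{1..n}.
          (\<Sum>k\<in>{1..n}. m k * (sdist x i j - sdist x j k + sdist x i k)) = 0)
     \<and> ((int n - 1) - aff_dim (x ` {1..n}) = 1 \<longrightarrow>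
          (\<forall>j\<in>{1..n}. aff_dim (x ` {1..n}) simplex (convex hull (x ` ({1..n} - {j})))
                     \<and> x j \<notin> rel_frontier (convex hull (x ` ({1..n} - {j})))))
     \<and> aff_dim (x ` {1..n}) \<le> int n - 2
     \<and> (\<forall>y. affine_coords x {1..n} (nat (aff_dim (x ` {1..n}))) y \<longrightarrow>
          (let d = nat (aff_dim (x ` {1..n})) in
            Delta n d y {d+2..n} \<noteq> 0 \<longrightarrow>
            (\<forall>i\<in>{1..d+1}.
               (-1) powi (int i - int d) * m i * Delta n d y {d+2..n}
               = (\<Sum>l\<in>{d+2..n}. m l * Delta n d y (insert i ({d+2..n} - {l}))))))"
proof -
  let ?I = "{1..n}"
  have fin: "finite ?I" by simp
  have S0: "(\<Sum>i\<in>?I. m i *\<^sub>R x i) = 0" by (rule center_zero[OF fin total lam_nz cc])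
  have W: "m \<in> W0 x ?I" unfolding W0_def using W0_sum[OF S0 total] by simp
  have n2: "n \<ge> 2"
  proof (rule ccontr)
    assume "\<not> n \<ge> 2"
    then have "n = 1" using n_pos by simp
    then show False using total masses by simp
  qed
  have part2: "\<forall>j\<in>?I. (\<Sum>i\<in>?I - {j}. m i) \<noteq> 0 \<and> x j = barycenter m x (?I - {j})"
  proof
    fix j assume j: "j \<in> ?I"
    have sj: "(\<Sum>i\<in>?I - {j}. m i) = - m j" using total j by (simp add: sum_diff1)
    have mj: "m j \<noteq> 0" using masses j by simp
    have sol: "(\<Sum>i\<in>?I - {j}. m i *\<^sub>R (x i - x j)) = 0"
      using W0_sum[OF S0 total, of "x j"] j by (simp add: sum_diff1)
    have "barycenter m x (?I - {j}) = x j"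
      unfolding barycenter_def
    proof (rule the_equality)
      show "(\<Sum>i\<in>?I - {j}. m i *\<^sub>R (x i - x j)) = 0" by (rule sol)
      fix G assume h: "(\<Sum>i\<in>?I - {j}. m i *\<^sub>R (x i - G)) = 0"
      have e: "m i *\<^sub>R (x i - G) = m i *\<^sub>R (x i - x j) + m i *\<^sub>R (x j - G)" for i
        by (simp add: algebra_simps)
      have "(\<Sum>i\<in>?I - {j}. m i *\<^sub>R (x i - G)) = (\<Sum>i\<in>?I - {j}. m i *\<^sub>R (x i - x j)) + (\<Sum>i\<in>?I - {j}. m i) *\<^sub>R (x j - G)"
        unfolding e sum.distrib scaleR_sum_left ..
      then have "(- m j) *\<^sub>R (x j - G) = 0" using h sol sj by simp
      then show "G = x j" using mj by simp
    qed
    then show "(\<Sum>i\<in>?I - {j}. m i) \<noteq> 0 \<and> x j = barycenter m x (?I - {j})" using sj mj by simp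
  qed
  have aff: "aff_dim (x ` ?I) \<le> int n - 2"
    using aff_dim_bound[OF fin distinct S0 total, of 1] masses n_pos by simp
  have mom: "\<exists>C. \<forall>p. moment2 m x ?I p = C"
    using moment2_const[OF S0 total] by blast
  have pair: "(\<Sum>i\<in>?I. \<Sum>j\<in>?I. if i < j then m i * m j * sdist x i j else 0) = 0"
    by (rule pair_sum[OF S0 total])
  have trip: "\<forall>i\<in>?I. \<forall>j\<in>?I. (\<Sum>k\<in>?I. m k * (sdist x i j - sdist x j k + sdist x i k)) = 0"
    using triple_sum[OF S0 total] by blast
  have cod: "(int n - 1) - aff_dim (x ` ?I) = 1 \<longrightarrow>
          (\<forall>j\<in>?I. aff_dim (x ` ?I) simplex (convex hull (x ` (?I - {j})))
                     \<and> x j \<notin> rel_frontier (convex hull (x ` (?I - {j}))))"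
  proof (intro impI ballI)
    fix j assume h: "(int n - 1) - aff_dim (x ` ?I) = 1" and j: "j \<in> ?I"
    have "aff_dim (x ` ?I) = int (card ?I) - 2" using h by simp
    then show "aff_dim (x ` ?I) simplex (convex hull (x ` (?I - {j})))
                     \<and> x j \<notin> rel_frontier (convex hull (x ` (?I - {j})))"
      using codim1[OF fin distinct S0 total masses j] by blast
  qed
  have dets: "\<forall>y. affine_coords x ?I (nat (aff_dim (x ` ?I))) y \<longrightarrow>
          (let d = nat (aff_dim (x ` ?I)) in
            Delta n d y {d+2..n} \<noteq> 0 \<longrightarrow>
            (\<forall>i\<in>{1..d+1}.
               (-1) powi (int i - int d) * m i * Delta n d y {d+2..n}
               = (\<Sum>l\<in>{d+2..n}. m l * Delta n d y (insert i ({d+2..n} - {l})))))"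
  proof (intro allI impI)
    fix y assume ac: "affine_coords x ?I (nat (aff_dim (x ` ?I))) y"
    define d where "d = nat (aff_dim (x ` ?I))"
    have "x ` ?I \<noteq> {}" using n_pos by auto
    then have "aff_dim (x ` ?I) \<ge> 0" using aff_dim_negative_iff[of "x ` ?I"] by linarith
    then have dn: "d + 1 \<le> n" using aff unfolding d_def by linarith
    have tot: "\<forall>r<d+1. (\<Sum>j\<in>?I. m j * colf y j r) = 0"
    proof (intro allI impI)
      fix r assume r: "r < d + 1"
      show "(\<Sum>j\<in>?I. m j * colf y j r) = 0"
      proof (cases r)
        case 0
        then show ?thesis using total by (simp add: colf_def)
      next
        case (Suc r')
        then have "r' < d" using r by simp
        then have "(\<Sum>j\<in>?I. m j * y j r') = 0"
          using coords_zero[OF ac[folded d_def] S0 total] by blast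
        then show ?thesis using Suc by (simp add: colf_def)
      qed
    qed
    show "let d = nat (aff_dim (x ` ?I)) in
            Delta n d y {d+2..n} \<noteq> 0 \<longrightarrow>
            (\<forall>i\<in>{1..d+1}.
               (-1) powi (int i - int d) * m i * Delta n d y {d+2..n}
               = (\<Sum>l\<in>{d+2..n}. m l * Delta n d y (insert i ({d+2..n} - {l}))))"
      unfolding Let_def d_def[symmetric]
      using det_identity[OF dn tot] by blast
  qed
  have cd: "(int n - 1) - aff_dim (x ` ?I) \<ge> 1" using aff by linarith
  show ?thesis
    by (intro conjI W part2 cd mom pair trip cod aff dets)
qed

end
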